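(* Let $P$ be a finite poset of dimension $d$. There exists a constant $c_P$ such that for every positive integer $m$, if a set $S\subseteq[m]^d$ does not contain a copy of $P$, then $|S|\le c_P\, m^{d-1}$.
   Context: $[m]=\{1,\dots,m\}$ and $[m]^d$ is ordered pointwise: $(x_1,\dots,x_d)\le(y_1,\dots,y_d)$ iff $x_i\le y_i$ for all $i$. A subset $P'$ of a poset $Q$ is a copy of $P$ if the subposet of $Q$ induced on $P'$ is isomorphic to $P$. The (Dushnik–Miller) dimension of $P$ is the smallest positive integer $d$ for which there exist bijections $L_1,\dots,L_d:P\to[|P|]$ such that $p\le_P q$ iff $L_i(p)\le L_i(q)$ for every $i\in[d]$. *)

theory Defs
  imports Complex_Main
begin

definition partial_order_on_set :: "'a set \<Rightarrow> ('a \<Rightarrow> 'a \<Rightarrow> bool) \<Rightarrow> bool" where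
  "partial_order_on_set A le \<longleftrightarrow>
     (\<forall>x\<in>A. le x x) \<and>
     (\<forall>x\<in>A. \<forall>y\<in>A. le x y \<and> le y x \<longrightarrow> x = y) \<and>
     (\<forall>x\<in>A. \<forall>y\<in>A. \<forall>z\<in>A. le x y \<and> le y z \<longrightarrow> le x z)"

definition realizer :: "'a set \<Rightarrow> ('a \<Rightarrow> 'a \<Rightarrow> bool) \<Rightarrow> nat \<Rightarrow> bool" where
  "realizer A le d \<longleftrightarrow>
     (\<exists>L :: nat \<Rightarrow> 'a \<Rightarrow> nat.
        (\<forall>i<d. bij_betw (L i) A {1..card A}) \<and>
        (\<forall>p\<in>A. \<forall>q\<in>A. le p q \<longleftrightarrow> (\<forall>i<d. L i p \<le> L i q)))"

definition poset_dim :: "'a set \<Rightarrow> ('a \<Rightarrow> 'a \<Rightarrow> bool) \<Rightarrow> nat" where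
  "poset_dim A le = (LEAST d. 0 < d \<and> realizer A le d)"

definition grid :: "nat \<Rightarrow> nat \<Rightarrow> nat list set" where
  "grid m d = {x. length x = d \<and> set x \<subseteq> {1..m}}"

definition pw_le :: "nat list \<Rightarrow> nat list \<Rightarrow> bool" where
  "pw_le x y \<longleftrightarrow> list_all2 (\<le>) x y"

definition contains_copy :: "nat list set \<Rightarrow> 'a set \<Rightarrow> ('a \<Rightarrow> 'a \<Rightarrow> bool) \<Rightarrow> bool" where
  "contains_copy S A le \<longleftrightarrow>
     (\<exists>f. inj_on f A \<and> f ` A \<subseteq> S \<and>
          (\<forall>p\<in>A. \<forall>q\<in>A. le p q \<longleftrightarrow> pw_le (f p) (f q)))"

end

theory Submission
  imports Defs "HOL-Library.FuncSet" "HOL-Library.Product_Lexorder"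
begin


definition Gr :: "nat \<Rightarrow> nat set \<Rightarrow> (nat \<Rightarrow> nat) set" where
  "Gr m I = Pi\<^sub>E I (\<lambda>_. {1..m})"

definition haspat :: "'a set \<Rightarrow> (nat \<Rightarrow> 'a \<Rightarrow> nat) \<Rightarrow> nat set \<Rightarrow> (nat \<Rightarrow> nat) set \<Rightarrow> bool" where
  "haspat A L I S \<longleftrightarrow> (\<exists>g. (\<forall>a\<in>A. g a \<in> S) \<and> (\<forall>a\<in>A. \<forall>b\<in>A. \<forall>i\<in>I. L i a < L i b \<longrightarrow> g a i < g b i))"

lemma card_Gr: "finite I \<Longrightarrow> card (Gr m I) = m ^ card I"
  by (simp add: Gr_def card_PiE)

lemma finite_Gr: "finite I \<Longrightarrow> finite (Gr m I)"
  by (simp add: Gr_def finite_PiE)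

lemma match:
  fixes f :: "'a \<Rightarrow> nat" and W :: "nat set"
  assumes "finite A" "inj_on f A" "finite W" "card A \<le> card W"
  shows "\<exists>h. (\<forall>a\<in>A. h a \<in> W) \<and> (\<forall>a\<in>A. \<forall>b\<in>A. f a < f b \<longrightarrow> h a < h b)"
proof -
  define xs where "xs = sorted_list_of_set W"
  define rk where "rk a = card {b\<in>A. f b < f a}" for a
  have len: "length xs = card W" by (simp add: xs_def)
  have ss: "sorted_wrt (<) xs" by (simp add: xs_def strict_sorted_list_of_set)
  have sx: "set xs = W" using assms(3) by (simp add: xs_def)
  have rkA: "rk a < card A" if "a \<in> A" for a
  proof -
    have "{b\<in>A. f b < f a} \<subset> A" using that by auto
    then show ?thesis unfolding rk_def using assms(1) psubset_card_mono by blast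
  qed
  have rkm: "rk a < rk b" if "a \<in> A" "b \<in> A" "f a < f b" for a b
  proof -
    have "{c\<in>A. f c < f a} \<subset> {c\<in>A. f c < f b}" using that by auto
    then show ?thesis unfolding rk_def using assms(1) psubset_card_mono
      by (metis (no_types, lifting) finite_subset mem_Collect_eq subsetI)
  qed
  show ?thesis
  proof (intro exI[of _ "\<lambda>a. xs ! rk a"] conjI ballI impI)
    fix a assume "a \<in> A"
    then show "xs ! rk a \<in> W" using rkA[of a] len assms(4) sx nth_mem by (metis order_less_le_trans)
  next
    fix a b assume "a \<in> A" "b \<in> A" "f a < f b"
    then show "xs ! rk a < xs ! rk b" using rkm rkA[of b] len assms(4)
      by (metis order_less_le_trans ss sorted_wrt_nth_less)
  qed
qed


definition proj :: "nat set \<Rightarrow> nat \<Rightarrow> (nat \<Rightarrow> nat) \<Rightarrow> (nat \<Rightarrow> nat)" where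
  "proj I i x = restrict x (I - {i})"

lemma prune:
  fixes Y :: "(nat \<Rightarrow> nat) set"
  assumes "finite Y" "finite I"
  shows "card Y \<le> r * (\<Sum>i\<in>I. card (proj I i ` Y)) \<or>
         (\<exists>Z\<subseteq>Y. Z \<noteq> {} \<and> (\<forall>z\<in>Z. \<forall>i\<in>I. r < card {z'\<in>Z. proj I i z' = proj I i z}))"
  using assms(1)
proof (induction "card Y" arbitrary: Y rule: less_induct)
  case less
  show ?case
  proof (cases "\<exists>y\<in>Y. \<exists>i\<in>I. card {y'\<in>Y. proj I i y' = proj I i y} \<le> r")
    case True
    then obtain y i where y: "y \<in> Y" and i: "i \<in> I" and cl: "card {y'\<in>Y. proj I i y' = proj I i y} \<le> r" by blast
    define Ln where "Ln = {y'\<in>Y. proj I i y' = proj I i y}"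
    define Y' where "Y' = Y - Ln"
    have fY': "finite Y'" using less.prems Y'_def by auto
    have lt: "card Y' < card Y" unfolding Y'_def Ln_def
      using y less.prems by (intro psubset_card_mono) auto
    have cY: "card Y = card Y' + card Ln"
    proof -
      have "Ln \<subseteq> Y" "finite Ln" unfolding Ln_def using less.prems by auto
      moreover have "card Ln \<le> card Y" using \<open>Ln \<subseteq> Y\<close> less.prems by (rule card_mono[rotated])
      ultimately show ?thesis unfolding Y'_def by (simp add: card_Diff_subset)
    qed
    have sub1: "proj I j ` Y' \<subseteq> proj I j ` Y" for j unfolding Y'_def by auto
    have sub2: "proj I i ` Y' \<subseteq> proj I i ` Y - {proj I i y}" unfolding Y'_def Ln_def by auto
    have fin: "finite (proj I j ` Y)" for j using less.prems by auto
    have c2: "card (proj I i ` Y') + 1 \<le> card (proj I i ` Y)"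
    proof -
      have "card (proj I i ` Y') \<le> card (proj I i ` Y - {proj I i y})"
        using sub2 fin by (intro card_mono) auto
      also have "\<dots> = card (proj I i ` Y) - 1" using y fin by (simp add: card_Diff_singleton)
      finally have "card (proj I i ` Y') \<le> card (proj I i ` Y) - 1" .
      moreover have "card (proj I i ` Y) > 0" using y fin[of i] card_gt_0_iff by blast
      ultimately show ?thesis by linarith
    qed
    have ssum: "(\<Sum>j\<in>I. card (proj I j ` Y')) + 1 \<le> (\<Sum>j\<in>I. card (proj I j ` Y))"
    proof -
      have "(\<Sum>j\<in>I. card (proj I j ` Y')) = card (proj I i ` Y') + (\<Sum>j\<in>I-{i}. card (proj I j ` Y'))"
        using i assms(2) by (simp add: sum.remove)
      moreover have "(\<Sum>j\<in>I. card (proj I j ` Y)) = card (proj I i ` Y) + (\<Sum>j\<in>I-{i}. card (proj I j ` Y))"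
        using i assms(2) by (simp add: sum.remove)
      moreover have "(\<Sum>j\<in>I-{i}. card (proj I j ` Y')) \<le> (\<Sum>j\<in>I-{i}. card (proj I j ` Y))"
        using sub1 fin by (intro sum_mono card_mono) auto
      ultimately show ?thesis using c2 by linarith
    qed
    from less.hyps[OF lt fY'] show ?thesis
    proof
      assume h: "card Y' \<le> r * (\<Sum>i\<in>I. card (proj I i ` Y'))"
      have "card Y \<le> r * (\<Sum>i\<in>I. card (proj I i ` Y')) + r" using cY h cl unfolding Ln_def[symmetric] by linarith
      also have "\<dots> = r * ((\<Sum>i\<in>I. card (proj I i ` Y')) + 1)" by simp
      also have "\<dots> \<le> r * (\<Sum>i\<in>I. card (proj I i ` Y))" using ssum by (intro mult_le_mono2)
      finally show ?thesis by blast
    next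
      assume "\<exists>Z\<subseteq>Y'. Z \<noteq> {} \<and> (\<forall>z\<in>Z. \<forall>i\<in>I. r < card {z' \<in> Z. proj I i z' = proj I i z})"
      then show ?thesis unfolding Y'_def by blast
    qed
  next
    case False
    show ?thesis
    proof (cases "Y = {}")
      case True then show ?thesis by simp
    next
      case ne: False
      then show ?thesis using False by (intro disjI2 exI[of _ Y]) (auto simp: not_le)
    qed
  qed
qed


lemma proj_eq_D:
  assumes "w \<in> Pi\<^sub>E I X" "z \<in> Pi\<^sub>E I X" "proj I j w = proj I j z" "l \<noteq> j"
  shows "w l = z l"
proof (cases "l \<in> I")
  case True
  then have "proj I j w l = proj I j z l" using assms(3) by simp
  then show ?thesis using True assms(4) by (simp add: proj_def)
next
  case False
  then show ?thesis using assms(1,2) by (simp add: PiE_def extensional_def)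
qed

lemma grow:
  assumes fZ: "finite Z" and ZP: "Z \<subseteq> Pi\<^sub>E I X"
    and rich: "\<forall>z\<in>Z. \<forall>i\<in>I. r < card {z'\<in>Z. proj I i z' = proj I i z}"
  shows "finite J \<Longrightarrow> J \<subseteq> I \<Longrightarrow> z \<in> Z \<Longrightarrow> (r+1)^card J \<le> card {z'\<in>Z. \<forall>l. l\<notin>J \<longrightarrow> z' l = z l}"
proof (induction J arbitrary: z rule: finite_induct)
  case empty
  have "z \<in> {z'\<in>Z. \<forall>l. l\<notin>{} \<longrightarrow> z' l = z l}" using empty by auto
  then have "{z'\<in>Z. \<forall>l. l\<notin>{} \<longrightarrow> z' l = z l} \<noteq> {}" by blast
  then show ?case using fZ by (simp add: card_gt_0_iff Suc_le_eq)
next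
  case (insert j J0)
  define Ln where "Ln = {w\<in>Z. proj I j w = proj I j z}"
  define Q where "Q w = {z'\<in>Z. \<forall>l. l\<notin>J0 \<longrightarrow> z' l = w l}" for w
  have jI: "j \<in> I" using insert by auto
  have cLn: "r + 1 \<le> card Ln" using rich insert.prems jI unfolding Ln_def by fastforce
  have agree: "w l = z l" if "w \<in> Ln" "l \<noteq> j" for w l
    using that ZP insert.prems(2) unfolding Ln_def by (intro proj_eq_D[of w I X z j l]) auto
  have sub: "(\<Union>w\<in>Ln. Q w) \<subseteq> {z'\<in>Z. \<forall>l. l\<notin>insert j J0 \<longrightarrow> z' l = z l}"
    unfolding Q_def using agree by auto
  have disj: "\<forall>w\<in>Ln. \<forall>w'\<in>Ln. w \<noteq> w' \<longrightarrow> Q w \<inter> Q w' = {}"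
  proof (intro ballI impI)
    fix w w' assume "w \<in> Ln" "w' \<in> Ln" "w \<noteq> w'"
    then have "w j \<noteq> w' j" using agree by (metis ext)
    then show "Q w \<inter> Q w' = {}" unfolding Q_def using insert.hyps(2) by auto
  qed
  have fL: "finite Ln" using fZ Ln_def by auto
  have "(r+1)^card (insert j J0) = (r+1) * (r+1)^card J0" using insert.hyps by simp
  also have "\<dots> \<le> card Ln * (r+1)^card J0" using cLn by (intro mult_le_mono1)
  also have "\<dots> = (\<Sum>w\<in>Ln. (r+1)^card J0)" by simp
  also have "\<dots> \<le> (\<Sum>w\<in>Ln. card (Q w))"
  proof (rule sum_mono)
    fix w assume w: "w \<in> Ln"
    then have "w \<in> Z" unfolding Ln_def by auto
    then show "(r+1)^card J0 \<le> card (Q w)" unfolding Q_def using insert by auto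
  qed
  also have "\<dots> = card (\<Union>w\<in>Ln. Q w)"
    using disj fL fZ by (intro card_UN_disjoint[symmetric]) (auto simp: Q_def)
  also have "\<dots> \<le> card {z'\<in>Z. \<forall>l. l\<notin>insert j J0 \<longrightarrow> z' l = z l}"
    using sub fZ by (intro card_mono) auto
  finally show ?case .
qed

lemma lw:
  assumes fY: "finite Y" and YP: "Y \<subseteq> Pi\<^sub>E I X" and fI: "finite I" and ne: "I \<noteq> {}"
    and pb: "\<forall>i\<in>I. card (proj I i ` Y) \<le> p" and pr: "p < (r+1)^(card I - 1)"
  shows "card Y \<le> r * (card I * p)"
  using prune[OF fY fI, of r]
proof
  assume "card Y \<le> r * (\<Sum>i\<in>I. card (proj I i ` Y))"
  also have "\<dots> \<le> r * (\<Sum>i\<in>I. p)" using pb by (intro mult_le_mono2 sum_mono) auto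
  finally show ?thesis by simp
next
  assume "\<exists>Z\<subseteq>Y. Z \<noteq> {} \<and> (\<forall>z\<in>Z. \<forall>i\<in>I. r < card {z' \<in> Z. proj I i z' = proj I i z})"
  then obtain Z where Z: "Z \<subseteq> Y" "Z \<noteq> {}" and rich: "\<forall>z\<in>Z. \<forall>i\<in>I. r < card {z' \<in> Z. proj I i z' = proj I i z}"
    by blast
  obtain z where z: "z \<in> Z" using Z by auto
  obtain i where i: "i \<in> I" using ne by auto
  have fZ: "finite Z" using Z fY finite_subset by auto
  have ZP: "Z \<subseteq> Pi\<^sub>E I X" using Z YP by auto
  define Qz where "Qz = {z'\<in>Z. \<forall>l. l\<notin>I-{i} \<longrightarrow> z' l = z l}"
  have "(r+1)^card (I-{i}) \<le> card Qz"
    unfolding Qz_def using grow[OF fZ ZP rich, of "I-{i}" z] fI z by auto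
  also have "card Qz = card (proj I i ` Qz)"
  proof -
    have "inj_on (proj I i) Qz"
    proof (rule inj_onI)
      fix x y assume x: "x \<in> Qz" and y: "y \<in> Qz" and e: "proj I i x = proj I i y"
      show "x = y"
      proof
        fix l
        show "x l = y l"
        proof (cases "l = i")
          case True then show ?thesis using x y unfolding Qz_def by auto
        next
          case False then show ?thesis using proj_eq_D[OF _ _ e False, of X] x y ZP unfolding Qz_def by auto
        qed
      qed
    qed
    then show ?thesis by (simp add: card_image)
  qed
  also have "\<dots> \<le> card (proj I i ` Y)" using Z fY unfolding Qz_def by (intro card_mono) auto
  also have "\<dots> \<le> p" using pb i by auto
  finally show ?thesis using pr i fI by (simp add: card_Diff_singleton)
qed


definition blk :: "nat \<Rightarrow> nat set \<Rightarrow> (nat \<Rightarrow> nat) \<Rightarrow> (nat \<Rightarrow> nat)" where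
  "blk s I x = (\<lambda>j\<in>I. (x j - 1) div s + 1)"
definition loc :: "nat \<Rightarrow> nat set \<Rightarrow> (nat \<Rightarrow> nat) \<Rightarrow> (nat \<Rightarrow> nat)" where
  "loc s I x = (\<lambda>j\<in>I. (x j - 1) mod s + 1)"

lemma blk_Gr: assumes "0 < s" "x \<in> Gr (t*s) I" shows "blk s I x \<in> Gr t I"
proof -
  have "(x j - 1) div s + 1 \<in> {1..t}" if "j \<in> I" for j
  proof -
    have "x j \<in> {1..t*s}" using assms that by (auto simp: Gr_def)
    then have "x j - 1 < t * s" by auto
    then have "(x j - 1) div s < t" using assms(1) by (simp add: div_less_iff_less_mult)
    then show ?thesis by auto
  qed
  then show ?thesis by (auto simp: Gr_def blk_def)
qed

lemma loc_Gr: assumes "0 < s" shows "loc s I x \<in> Gr s I"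
  using assms by (auto simp: Gr_def loc_def Suc_le_eq)

lemma blk_loc_inj: assumes "x \<in> Gr m I" "y \<in> Gr m' I" "blk s I x = blk s I y" "loc s I x = loc s I y"
  shows "x = y"
proof
  fix j show "x j = y j"
  proof (cases "j \<in> I")
    case True
    have e1: "blk s I x j = blk s I y j" "loc s I x j = loc s I y j" using assms(3,4) by auto
    then have "(x j - 1) div s = (y j - 1) div s" "(x j - 1) mod s = (y j - 1) mod s"
      using True by (auto simp: blk_def loc_def)
    then have "x j - 1 = y j - 1" by (metis div_mod_decomp)
    moreover have "x j \<ge> 1" "y j \<ge> 1" using assms(1,2) True by (auto simp: Gr_def)
    ultimately show ?thesis by linarith
  next
    case False then show ?thesis using assms(1,2) by (auto simp: Gr_def PiE_def extensional_def)
  qed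
qed

lemma blk_less: assumes "j \<in> I" "blk s I x j < blk s I y j" shows "x j < y j"
proof -
  have "(x j - 1) div s < (y j - 1) div s" using assms by (simp add: blk_def)
  then have "x j - 1 < y j - 1" using div_le_mono not_less by blast
  then show ?thesis by linarith
qed

lemma blk_loc_less: assumes "j \<in> I" "blk s I x j = blk s I y j" "loc s I x j < loc s I y j"
  "x j \<ge> 1" "y j \<ge> 1" shows "x j < y j"
proof -
  have "(x j - 1) div s = (y j - 1) div s" "(x j - 1) mod s < (y j - 1) mod s" using assms by (auto simp: blk_def loc_def)
  then have "x j - 1 < y j - 1" by (metis add_less_cancel_left div_mod_decomp mult.commute)
  then show ?thesis by linarith
qed

lemma proj_Gr: assumes "x \<in> Gr m I" shows "proj I i x \<in> Gr m (I - {i})"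
  using assms by (auto simp: Gr_def proj_def)

lemma proj_apply: "j \<in> I \<Longrightarrow> j \<noteq> i \<Longrightarrow> proj I i x j = x j"
  by (simp add: proj_def)

lemma contract:
  assumes "0 < s" "S \<subseteq> Gr (t*s) I" "haspat A L I (blk s I ` S)"
  shows "haspat A L I S"
proof -
  obtain g' where g': "\<forall>a\<in>A. g' a \<in> blk s I ` S" "\<forall>a\<in>A. \<forall>b\<in>A. \<forall>i\<in>I. L i a < L i b \<longrightarrow> g' a i < g' b i"
    using assms(3) unfolding haspat_def by blast
  have "\<forall>a\<in>A. \<exists>x. x \<in> S \<and> blk s I x = g' a"
  proof
    fix a assume "a \<in> A"
    then obtain x where "x \<in> S" "g' a = blk s I x" using g'(1) by blast
    then show "\<exists>x. x \<in> S \<and> blk s I x = g' a" by metis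
  qed
  then obtain g where g: "\<forall>a\<in>A. g a \<in> S \<and> blk s I (g a) = g' a"
    using bchoice[of A "\<lambda>a x. x \<in> S \<and> blk s I x = g' a"] by blast
  show ?thesis unfolding haspat_def
  proof (intro exI[of _ g] conjI ballI impI)
    fix a assume "a \<in> A" then show "g a \<in> S" using g by blast
  next
    fix a b i assume a: "a \<in> A" and b: "b \<in> A" and i: "i \<in> I" and lt: "L i a < L i b"
    then have "g' a i < g' b i" using g'(2) by blast
    then have "blk s I (g a) i < blk s I (g b) i" using g a b by simp
    then show "g a i < g b i" using blk_less i by blast
  qed
qed

lemma base:
  assumes fA: "finite A" and inj: "inj_on (L i) A" and SG: "S \<subseteq> Gr m {i}" and np: "\<not> haspat A L {i} S"
  shows "card S < card A"
proof (rule ccontr)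
  assume "\<not> card S < card A"
  then have cle: "card A \<le> card S" by simp
  have fS: "finite S" using SG finite_Gr finite_subset by blast
  have injS: "inj_on (\<lambda>x. x i) S"
  proof (rule inj_onI)
    fix x y assume "x \<in> S" "y \<in> S" "x i = y i"
    then show "x = y" using SG by (intro blk_loc_inj[of x m "{i}" y m 1]) (auto simp: blk_def loc_def)
  qed
  obtain h where h: "\<forall>a\<in>A. h a \<in> (\<lambda>x. x i) ` S" "\<forall>a\<in>A. \<forall>b\<in>A. L i a < L i b \<longrightarrow> h a < h b"
    using match[OF fA inj, of "(\<lambda>x. x i) ` S"] fS cle card_image[OF injS] by auto
  have "\<forall>a\<in>A. \<exists>x. x \<in> S \<and> x i = h a"
  proof
    fix a assume "a \<in> A"
    then obtain x where "x \<in> S" "h a = x i" using h(1) by blast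
    then show "\<exists>x. x \<in> S \<and> x i = h a" by metis
  qed
  then obtain g where g: "\<forall>a\<in>A. g a \<in> S \<and> g a i = h a"
    using bchoice[of A "\<lambda>a x. x \<in> S \<and> x i = h a"] by blast
  have "haspat A L {i} S" unfolding haspat_def
    by (rule exI[of _ g]) (use g h(2) in auto)
  then show False using np by simp
qed


lemma pigeon:
  assumes "finite H" "finite F" "\<forall>b\<in>H. T b \<in> F" "\<forall>f\<in>F. card {b\<in>H. T b = f} \<le> q"
  shows "card H \<le> card F * q"
proof -
  have "H = (\<Union>f\<in>F. {b\<in>H. T b = f})" using assms(3) by auto
  then have "card H \<le> (\<Sum>f\<in>F. card {b\<in>H. T b = f})" by (metis card_UN_le assms(2))
  also have "\<dots> \<le> (\<Sum>f\<in>F. q)" using assms(4) by (intro sum_mono) auto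
  finally show ?thesis by simp
qed

lemma line:
  assumes fA: "finite A" and inj: "inj_on (L i) A" and iI: "i \<in> I" and s0: "0 < s"
    and SG: "S \<subseteq> Gr (t*s) I" and np: "\<not> haspat A L I S" and fI: "finite I"
  shows "card {b \<in> blk s I ` S. haspat A L (I-{i}) (proj I i ` loc s I ` {x\<in>S. blk s I x = b}) \<and> proj I i b = l}
         \<le> card (Gr s (I-{i})) ^ card A * (card A - 1)"
proof -
  define X where "X b = {x\<in>S. blk s I x = b}" for b
  define Hl where "Hl = {b \<in> blk s I ` S. haspat A L (I-{i}) (proj I i ` loc s I ` X b) \<and> proj I i b = l}"
  define G where "G = Gr s (I-{i})"
  define F where "F = Pi\<^sub>E A (\<lambda>_. G)"
  have fS: "finite S" using SG finite_Gr[OF fI] finite_subset by blast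
  have fHl: "finite Hl" unfolding Hl_def using fS by auto
  have fG: "finite G" unfolding G_def using fI by (simp add: finite_Gr)
  have cF: "card F = card G ^ card A" unfolding F_def using fA by (simp add: card_PiE)
  have fF: "finite F" unfolding F_def using fA fG by (simp add: finite_PiE)
  have "\<forall>b\<in>Hl. \<exists>g. (\<forall>a\<in>A. g a \<in> proj I i ` loc s I ` X b) \<and>
          (\<forall>a\<in>A. \<forall>a'\<in>A. \<forall>j\<in>I-{i}. L j a < L j a' \<longrightarrow> g a j < g a' j)"
    unfolding Hl_def haspat_def by blast
  then obtain T0 where T0: "\<forall>b\<in>Hl. (\<forall>a\<in>A. T0 b a \<in> proj I i ` loc s I ` X b) \<and>
          (\<forall>a\<in>A. \<forall>a'\<in>A. \<forall>j\<in>I-{i}. L j a < L j a' \<longrightarrow> T0 b a j < T0 b a' j)"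
    by metis
  define T where "T b = restrict (T0 b) A" for b
  have TF: "\<forall>b\<in>Hl. T b \<in> F"
  proof
    fix b assume b: "b \<in> Hl"
    have "T0 b a \<in> G" if "a \<in> A" for a
    proof -
      obtain x where "x \<in> S" "T0 b a = proj I i (loc s I x)" using T0 b \<open>a \<in> A\<close> unfolding X_def by blast
      then show ?thesis unfolding G_def using proj_Gr loc_Gr[OF s0] by metis
    qed
    then show "T b \<in> F" unfolding T_def F_def by auto
  qed
  have "\<forall>f\<in>F. card {b\<in>Hl. T b = f} \<le> card A - 1"
  proof (rule ccontr)
    assume "\<not> ?thesis"
    then obtain f where fF': "f \<in> F" and cQ: "card A \<le> card {b\<in>Hl. T b = f}" by force
    define Q where "Q = {b\<in>Hl. T b = f}"
    have fQ: "finite Q" unfolding Q_def using fHl by auto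
    have QG: "Q \<subseteq> Gr t I" unfolding Q_def Hl_def using SG blk_Gr[OF s0] by auto
    have injQ: "inj_on (\<lambda>b. b i) Q"
    proof (rule inj_onI)
      fix b b' assume b: "b \<in> Q" and b': "b' \<in> Q" and e: "b i = b' i"
      have pe: "proj I i b = proj I i b'" using b b' unfolding Q_def Hl_def by auto
      show "b = b'"
      proof
        fix j show "b j = b' j"
          using e proj_eq_D[OF _ _ pe, of "\<lambda>_. {1..t}" j] QG b b' by (cases "j = i") (auto simp: Gr_def)
      qed
    qed
    obtain h where h: "\<forall>a\<in>A. h a \<in> (\<lambda>b. b i) ` Q" "\<forall>a\<in>A. \<forall>a'\<in>A. L i a < L i a' \<longrightarrow> h a < h a'"
      using match[OF fA inj, of "(\<lambda>b. b i) ` Q"] fQ cQ card_image[OF injQ] unfolding Q_def by auto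
    have "\<forall>a\<in>A. \<exists>b. b \<in> Q \<and> b i = h a"
    proof
      fix a assume "a \<in> A"
      then obtain b where "b \<in> Q" "h a = b i" using h(1) by blast
      then show "\<exists>b. b \<in> Q \<and> b i = h a" by metis
    qed
    then obtain bb where bb: "\<forall>a\<in>A. bb a \<in> Q \<and> bb a i = h a" using bchoice[of A "\<lambda>a b. b \<in> Q \<and> b i = h a"] by blast
    have ex: "\<exists>x. x \<in> S \<and> blk s I x = bb a \<and> proj I i (loc s I x) = f a" if a: "a \<in> A" for a
    proof -
      have bQ: "bb a \<in> Q" using bb a by auto
      then have "bb a \<in> Hl" "T (bb a) = f" unfolding Q_def by auto
      then have "f a = T0 (bb a) a" using a unfolding T_def by auto
      moreover have "T0 (bb a) a \<in> proj I i ` loc s I ` X (bb a)" using T0 \<open>bb a \<in> Hl\<close> a by blast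
      ultimately show ?thesis unfolding X_def by auto
    qed
    obtain g where g: "\<forall>a\<in>A. g a \<in> S \<and> blk s I (g a) = bb a \<and> proj I i (loc s I (g a)) = f a"
      using bchoice[of A "\<lambda>a x. x \<in> S \<and> blk s I x = bb a \<and> proj I i (loc s I x) = f a"] ex by blast
    have "haspat A L I S" unfolding haspat_def
    proof (intro exI[of _ g] conjI ballI impI)
      fix a assume "a \<in> A" then show "g a \<in> S" using g by auto
    next
      fix a a' j assume a: "a \<in> A" and a': "a' \<in> A" and j: "j \<in> I" and lt: "L j a < L j a'"
      show "g a j < g a' j"
      proof (cases "j = i")
        case True
        have "h a < h a'" using h(2) a a' lt True by blast
        then have "bb a i < bb a' i" using bb a a' by simp
        moreover have "blk s I (g a) = bb a" "blk s I (g a') = bb a'" using g a a' by blast+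
        ultimately have "blk s I (g a) j < blk s I (g a') j" using True by simp
        then show ?thesis using blk_less j by blast
      next
        case False
        have bHl: "bb a \<in> Hl" "T (bb a) = f" using bb a unfolding Q_def by auto
        have fa: "f a = T0 (bb a) a" "f a' = T0 (bb a) a'" using bHl a a' unfolding T_def by auto
        have T0b: "\<forall>x\<in>A. \<forall>y\<in>A. \<forall>j\<in>I-{i}. L j x < L j y \<longrightarrow> T0 (bb a) x j < T0 (bb a) y j"
          using T0 bHl(1) by blast
        have "j \<in> I - {i}" using j False by blast
        then have "T0 (bb a) a j < T0 (bb a) a' j" using T0b a a' lt by blast
        then have "f a j < f a' j" using fa by simp
        then have "loc s I (g a) j < loc s I (g a') j"
        proof -
          have "proj I i (loc s I (g a)) = f a" "proj I i (loc s I (g a')) = f a'" using g a a' by blast+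
          then have "loc s I (g a) j = f a j" "loc s I (g a') j = f a' j"
            using proj_apply[OF j False] by metis+
          then show ?thesis using \<open>f a j < f a' j\<close> by simp
        qed
        moreover have "blk s I (g a) j = blk s I (g a') j"
        proof -
          have "proj I i (bb a) = l" "proj I i (bb a') = l" using bb a a' unfolding Q_def Hl_def by auto
          then have "bb a j = bb a' j" using proj_apply[OF j False, of "bb a"] proj_apply[OF j False, of "bb a'"] by simp
          moreover have "blk s I (g a) = bb a" "blk s I (g a') = bb a'" using g a a' by blast+
          ultimately show ?thesis by simp
        qed
        moreover have "g a j \<ge> 1" "g a' j \<ge> 1"
        proof -
          have "g a \<in> Gr (t*s) I" "g a' \<in> Gr (t*s) I" using g a a' SG by blast+
          then show "g a j \<ge> 1" "g a' j \<ge> 1" using j unfolding Gr_def by (auto simp: PiE_iff)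
        qed
        ultimately show ?thesis using blk_loc_less j by blast
      qed
    qed
    then show False using np by simp
  qed
  then have "card Hl \<le> card F * (card A - 1)" using pigeon[OF fHl fF TF] by blast
  then show ?thesis unfolding Hl_def X_def cF G_def .
qed


lemma step:
  assumes fA: "finite A" and inj: "\<forall>i\<in>I. inj_on (L i) A" and fI: "finite I" and cI: "card I = n"
    and ne: "I \<noteq> {}" and s0: "0 < s"
    and IH: "\<forall>i\<in>I. \<forall>S'. S' \<subseteq> Gr s (I-{i}) \<and> \<not> haspat A L (I-{i}) S' \<longrightarrow> card S' \<le> p"
    and pr: "p < (r+1)^(n-1)"
    and F: "\<forall>S'. S' \<subseteq> Gr t I \<and> \<not> haspat A L I S' \<longrightarrow> card S' \<le> q"
    and SG: "S \<subseteq> Gr (t*s) I" and np: "\<not> haspat A L I S"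
  shows "card S \<le> q * (r*(n*p)) + n * (t^(n-1) * ((s^(n-1))^card A * (card A - 1))) * s^n"
proof -
  define X where "X b = {x\<in>S. blk s I x = b}" for b
  define B0 where "B0 = blk s I ` S"
  define Hs where "Hs i = {b \<in> blk s I ` S. haspat A L (I-{i}) (proj I i ` loc s I ` {x\<in>S. blk s I x = b})}" for i
  define Hall where "Hall = (\<Union>i\<in>I. Hs i)"
  define N where "N = (s^(n-1))^card A * (card A - 1)"
  have fS: "finite S" using SG finite_Gr[OF fI] finite_subset by blast
  have fB0: "finite B0" unfolding B0_def using fS by simp
  have HB: "Hall \<subseteq> B0" unfolding Hall_def Hs_def B0_def by auto
  have cS: "card S = (\<Sum>b\<in>B0. card (X b))"
  proof -
    have "S = (\<Union>b\<in>B0. X b)" unfolding B0_def X_def by auto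
    moreover have "card (\<Union>b\<in>B0. X b) = (\<Sum>b\<in>B0. card (X b))"
      using fB0 fS by (intro card_UN_disjoint) (auto simp: X_def)
    ultimately show ?thesis by simp
  qed
  have cX: "card (X b) = card (loc s I ` X b)" for b
  proof -
    have "inj_on (loc s I) (X b)"
    proof (rule inj_onI)
      fix x y assume "x \<in> X b" "y \<in> X b" "loc s I x = loc s I y"
      then show "x = y" using SG blk_loc_inj[of x "t*s" I y "t*s" s] unfolding X_def by auto
    qed
    then show ?thesis by (simp add: card_image)
  qed
  have locG: "loc s I ` X b \<subseteq> Gr s I" for b using loc_Gr[OF s0] by auto
  have fX: "finite (X b)" for b using fS unfolding X_def by auto
  have cIi: "card (I - {i}) = n - 1" if "i \<in> I" for i using that fI cI by (simp add: card_Diff_singleton)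
  have nh: "card (X b) \<le> r*(n*p)" if b: "b \<in> B0 - Hall" for b
  proof -
    have "card (loc s I ` X b) \<le> r * (card I * p)"
    proof (rule lw[of _ I "\<lambda>_. {1..s}"])
      show "finite (loc s I ` X b)" using fX by simp
      show "loc s I ` X b \<subseteq> Pi\<^sub>E I (\<lambda>_. {1..s})" using locG unfolding Gr_def .
      show "finite I" "I \<noteq> {}" using fI ne by auto
      show "p < (r+1)^(card I - 1)" using pr cI by simp
      show "\<forall>i\<in>I. card (proj I i ` loc s I ` X b) \<le> p"
      proof
        fix i assume i: "i \<in> I"
        have "proj I i ` loc s I ` X b \<subseteq> Gr s (I-{i})" using locG proj_Gr by blast
        moreover have "\<not> haspat A L (I-{i}) (proj I i ` loc s I ` X b)"
          using b i unfolding Hall_def Hs_def B0_def X_def by auto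
        ultimately show "card (proj I i ` loc s I ` X b) \<le> p" using IH i by blast
      qed
    qed
    then show ?thesis using cX cI by simp
  qed
  have hv: "card (X b) \<le> s^n" for b
  proof -
    have "card (loc s I ` X b) \<le> card (Gr s I)" using locG finite_Gr[OF fI] by (intro card_mono)
    then show ?thesis using cX card_Gr[OF fI] cI by simp
  qed
  have cB0: "card B0 \<le> q"
  proof -
    have "B0 \<subseteq> Gr t I" unfolding B0_def using SG blk_Gr[OF s0] by auto
    moreover have "\<not> haspat A L I B0" unfolding B0_def using contract[OF s0 SG] np by blast
    ultimately show ?thesis using F by blast
  qed
  have cHs: "card (Hs i) \<le> t^(n-1) * N" if i: "i \<in> I" for i
  proof -
    have "Hs i \<subseteq> (\<Union>l\<in>Gr t (I-{i}). {b\<in>Hs i. proj I i b = l})"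
    proof
      fix b assume b: "b \<in> Hs i"
      then have "b \<in> blk s I ` S" unfolding Hs_def by blast
      then have "b \<in> Gr t I" using SG blk_Gr[OF s0] by blast
      then have "proj I i b \<in> Gr t (I-{i})" by (rule proj_Gr)
      then show "b \<in> (\<Union>l\<in>Gr t (I-{i}). {b\<in>Hs i. proj I i b = l})" using b by blast
    qed
    note sub = this
    have "card (Hs i) \<le> card (\<Union>l\<in>Gr t (I-{i}). {b\<in>Hs i. proj I i b = l})"
    proof (rule card_mono[OF _ sub])
      have "finite (Hs i)" unfolding Hs_def using fS by simp
      then show "finite (\<Union>l\<in>Gr t (I-{i}). {b\<in>Hs i. proj I i b = l})" using fI by (auto simp: finite_Gr)
    qed
    also have "\<dots> \<le> (\<Sum>l\<in>Gr t (I-{i}). card {b\<in>Hs i. proj I i b = l})" by (rule card_UN_le) (simp add: finite_Gr fI)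
    also have "\<dots> \<le> (\<Sum>l\<in>Gr t (I-{i}). N)"
    proof (rule sum_mono)
      fix l
      have "{b\<in>Hs i. proj I i b = l} = {b \<in> blk s I ` S. haspat A L (I-{i}) (proj I i ` loc s I ` {x\<in>S. blk s I x = b}) \<and> proj I i b = l}"
        unfolding Hs_def by auto
      also have "card \<dots> \<le> card (Gr s (I-{i})) ^ card A * (card A - 1)"
        using line[OF fA _ i s0 SG np fI] inj i by blast
      also have "\<dots> = N" unfolding N_def using card_Gr[of "I-{i}" s] fI cIi[OF i] by simp
      finally show "card {b\<in>Hs i. proj I i b = l} \<le> N" .
    qed
    also have "\<dots> = t^(n-1) * N" using card_Gr[of "I-{i}" t] fI cIi[OF i] by simp
    finally show ?thesis .
  qed
  have cHall: "card Hall \<le> n * (t^(n-1) * N)"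
  proof -
    have "card Hall \<le> (\<Sum>i\<in>I. card (Hs i))" unfolding Hall_def by (rule card_UN_le[OF fI])
    also have "\<dots> \<le> (\<Sum>i\<in>I. t^(n-1) * N)" using cHs by (intro sum_mono) auto
    finally show ?thesis using cI by simp
  qed
  have "card S = (\<Sum>b\<in>B0 - Hall. card (X b)) + (\<Sum>b\<in>Hall. card (X b))"
    using cS sum.subset_diff[OF HB fB0] by simp
  also have "(\<Sum>b\<in>B0 - Hall. card (X b)) \<le> (\<Sum>b\<in>B0 - Hall. r*(n*p))" using nh by (intro sum_mono) auto
  also have "\<dots> \<le> q * (r*(n*p))"
  proof -
    have "card (B0 - Hall) \<le> q" using cB0 fB0 by (meson Diff_subset card_mono le_trans)
    then show ?thesis by simp
  qed
  also have "(\<Sum>b\<in>Hall. card (X b)) \<le> (\<Sum>b\<in>Hall. s^n)" using hv by (intro sum_mono) auto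
  also have "\<dots> \<le> n * (t^(n-1) * N) * s^n" using cHall by simp
  finally show ?thesis unfolding N_def by simp
qed

lemma arith_choice:
  fixes c e R s r p :: nat
  assumes R_def: "R = 2*(e+2)*c*(c+1)+2"
    and s_def: "s = R^(e+1)" and r_def: "r = (c+1)*R^e - 1" and p_def: "p = c*s^e"
  shows "p < (r+1)^(e+1)" "2*(r*((e+2)*p)) \<le> s^(e+1)" "2 \<le> s"
proof -
  have R2: "2 \<le> R" unfolding R_def by simp
  have Rp: "0 < R" using R2 by simp
  have r1: "r + 1 = (c+1)*R^e" unfolding r_def using Rp by simp
  have pe: "p = c * R^((e+1)*e)" unfolding p_def s_def by (simp only: power_mult[symmetric])
  have "(r+1)^(e+1) = (c+1)^(e+1) * R^(e*(e+1))" unfolding r1 by (simp only: power_mult_distrib power_mult[symmetric] mult.commute)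
  moreover have "c < (c+1)^(e+1)"
  proof -
    have "c + 1 \<le> (c+1)^(e+1)" by (metis Suc_eq_plus1 le_add2 power_increasing power_one_right zero_less_Suc
        Suc_le_eq)
    then show ?thesis by simp
  qed
  ultimately show "p < (r+1)^(e+1)" unfolding pe using Rp by (simp add: mult.commute)
  have "r \<le> (c+1)*R^e" unfolding r_def by simp
  then have "r*((e+2)*p) \<le> (c+1)*R^e*((e+2)*(c*R^((e+1)*e)))" unfolding pe by (intro mult_le_mono1)
  also have "\<dots> = ((e+2)*c*(c+1)) * R^(e + (e+1)*e)" by (simp add: power_add algebra_simps)
  finally have h1: "r*((e+2)*p) \<le> ((e+2)*c*(c+1)) * R^(e + (e+1)*e)" .
  have "2*(r*((e+2)*p)) \<le> 2*(((e+2)*c*(c+1)) * R^(e + (e+1)*e))" using h1 by (rule mult_le_mono2)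
  also have "\<dots> = (2*((e+2)*c*(c+1))) * R^(e + (e+1)*e)" by (simp only: mult.assoc)
  also have "\<dots> \<le> R * R^(e + (e+1)*e)" proof (rule mult_le_mono1)
    show "2*((e+2)*c*(c+1)) \<le> R" unfolding R_def by (simp only: mult.assoc le_add1)
  qed
  also have "\<dots> = R^((e+1)*(e+1))"
  proof -
    have "Suc (e + (e+1)*e) = (e+1)*(e+1)" by (simp add: algebra_simps)
    then show ?thesis by (metis power_Suc)
  qed
  also have "\<dots> = s^(e+1)" unfolding s_def by (simp only: power_mult[symmetric])
  finally show "2*(r*((e+2)*p)) \<le> s^(e+1)" .
  show "2 \<le> s" unfolding s_def using R2 by (metis le_add2 order_trans power_increasing power_one_right Rp Suc_eq_plus1 Suc_le_eq)
qed

lemma pow_between: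
  assumes "2 \<le> (s::nat)" "1 \<le> m"
  shows "\<exists>j. m \<le> s^j \<and> s^j \<le> s*m"
proof -
  have "m < 2^m" by (rule less_exp)
  also have "(2::nat)^m \<le> s^m" using assms(1) by (rule power_mono) simp
  finally have ex: "\<exists>j. m \<le> s^j" by (intro exI[of _ m]) simp
  define j where "j = (LEAST j. m \<le> s^j)"
  have j1: "m \<le> s^j" unfolding j_def using ex by (rule LeastI_ex)
  show ?thesis
  proof (cases j)
    case 0
    then have "s^j \<le> s*m" using assms by simp
    then show ?thesis using j1 by blast
  next
    case (Suc j')
    have "\<not> m \<le> s^j'"
    proof
      assume "m \<le> s^j'"
      then have "j \<le> j'" unfolding j_def by (rule Least_le)
      then show False using Suc by simp
    qed
    then have "s^j' \<le> m" by simp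
    then have "s^j \<le> s*m" using Suc by simp
    then show ?thesis using j1 by blast
  qed
qed

lemma Gr_mono: "m \<le> m' \<Longrightarrow> Gr m I \<subseteq> Gr m' I"
  unfolding Gr_def by (intro PiE_mono) auto

lemma Gr_0: "I \<noteq> {} \<Longrightarrow> Gr 0 I = {}"
  unfolding Gr_def by auto

lemma MT:
  assumes fA: "finite A"
  shows "finite I \<Longrightarrow> card I = Suc e \<Longrightarrow> \<forall>i\<in>I. inj_on (L i) A \<Longrightarrow>
    \<exists>c::nat. \<forall>m S. S \<subseteq> Gr m I \<and> \<not> haspat A L I S \<longrightarrow> card S \<le> c * m^e"
proof (induction e arbitrary: I)
  case 0
  then obtain i where I: "I = {i}" using card_1_singletonE by auto
  show ?case
  proof (intro exI[of _ "card A"] allI impI)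
    fix m S assume "S \<subseteq> Gr m I \<and> \<not> haspat A L I S"
    then have "card S < card A" using base[OF fA, of L i S m] I 0(3) by auto
    then show "card S \<le> card A * m^0" by simp
  qed
next
  case (Suc e)
  note fI = Suc.prems(1) and cI = Suc.prems(2) and inj = Suc.prems(3)
  have ne: "I \<noteq> {}" using cI by auto
  have "\<forall>i\<in>I. \<exists>c::nat. \<forall>m S. S \<subseteq> Gr m (I-{i}) \<and> \<not> haspat A L (I-{i}) S \<longrightarrow> card S \<le> c * m^e"
  proof
    fix i assume i: "i \<in> I"
    have "card (I-{i}) = Suc e" using i fI cI by (simp add: card_Diff_singleton)
    then show "\<exists>c::nat. \<forall>m S. S \<subseteq> Gr m (I-{i}) \<and> \<not> haspat A L (I-{i}) S \<longrightarrow> card S \<le> c * m^e"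
      using Suc.IH[of "I-{i}"] fI inj by auto
  qed
  then obtain cc where cc: "\<forall>i\<in>I. \<forall>m S. S \<subseteq> Gr m (I-{i}) \<and> \<not> haspat A L (I-{i}) S \<longrightarrow> card S \<le> cc i * m^e"
    using bchoice[of I "\<lambda>i c. \<forall>m S. S \<subseteq> Gr m (I-{i}) \<and> \<not> haspat A L (I-{i}) S \<longrightarrow> card S \<le> c * m^e"] by blast
  define c' where "c' = (\<Sum>i\<in>I. cc i)"
  have IHp: "\<forall>i\<in>I. \<forall>m S. S \<subseteq> Gr m (I-{i}) \<and> \<not> haspat A L (I-{i}) S \<longrightarrow> card S \<le> c' * m^e"
  proof (intro ballI allI impI)
    fix i m S assume i: "i \<in> I" and h: "S \<subseteq> Gr m (I-{i}) \<and> \<not> haspat A L (I-{i}) S"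
    have "cc i \<le> c'" unfolding c'_def using i fI by (intro member_le_sum) auto
    then have "cc i * m^e \<le> c' * m^e" by (rule mult_le_mono1)
    then show "card S \<le> c' * m^e" using cc i h by (meson le_trans)
  qed
  define R where "R = 2*(e+2)*c'*(c'+1)+2"
  define s where "s = R^(e+1)"
  define r where "r = (c'+1)*R^e - 1"
  define p where "p = c'*s^e"
  have ar: "p < (r+1)^(e+1)" "2*(r*((e+2)*p)) \<le> s^(e+1)" "2 \<le> s"
    using arith_choice[OF R_def s_def r_def p_def] by auto
  have s0: "0 < s" using ar(3) by simp
  define N0 where "N0 = (s^(Suc e))^card A * (card A - 1)"
  define C where "C = Suc (Suc e) * N0 * s^(Suc (Suc e))"
  define c0 where "c0 = 2*C + 1"
  define B where "B = r*(Suc (Suc e)*p)"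
  have B2: "2*B \<le> s^(Suc e)" using ar(2) unfolding B_def by simp
  have pw: "\<forall>S. S \<subseteq> Gr (s^j) I \<and> \<not> haspat A L I S \<longrightarrow> card S \<le> c0 * (s^j)^(Suc e)" for j
  proof (induction j)
    case 0
    show ?case
    proof (intro allI impI)
      fix S assume "S \<subseteq> Gr (s^0) I \<and> \<not> haspat A L I S"
      then have "card S \<le> card (Gr 1 I)" using finite_Gr[OF fI] by (intro card_mono) auto
      then show "card S \<le> c0 * (s^0)^(Suc e)" unfolding c0_def using card_Gr[OF fI, of 1] by simp
    qed
  next
    case (Suc j)
    define t where "t = s^j"
    define T where "T = t^(Suc e)"
    show ?case
    proof (intro allI impI)
      fix S assume h: "S \<subseteq> Gr (s^Suc j) I \<and> \<not> haspat A L I S"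
      have SG: "S \<subseteq> Gr (t*s) I" using h unfolding t_def by (simp add: mult.commute)
      have "card S \<le> (c0*T) * (r*(Suc (Suc e)*p)) + Suc (Suc e) * (t^(Suc (Suc e) - 1) * ((s^(Suc (Suc e) - 1))^card A * (card A - 1))) * s^Suc (Suc e)"
      proof (rule step[OF fA inj fI cI ne s0])
        show "\<forall>i\<in>I. \<forall>S'. S' \<subseteq> Gr s (I-{i}) \<and> \<not> haspat A L (I-{i}) S' \<longrightarrow> card S' \<le> p"
          using IHp unfolding p_def by blast
        show "p < (r+1)^(Suc (Suc e) - 1)" using ar(1) by simp
        show "\<forall>S'. S' \<subseteq> Gr t I \<and> \<not> haspat A L I S' \<longrightarrow> card S' \<le> c0*T"
          using Suc.IH unfolding T_def t_def by blast
        show "S \<subseteq> Gr (t*s) I" by (rule SG)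
        show "\<not> haspat A L I S" using h by blast
      qed
      also have "\<dots> = T * (c0 * B + C)"
        unfolding T_def B_def C_def N0_def by (simp add: algebra_simps)
      also have "\<dots> \<le> T * (c0 * s^(Suc e))"
      proof (rule mult_le_mono2)
        have "2*(c0*B) \<le> c0 * s^(Suc e)" using B2 by (metis mult.left_commute mult_le_mono2)
        moreover have "2*C < c0" unfolding c0_def by simp
        moreover have "c0 \<le> c0 * s^(Suc e)" using s0 by simp
        ultimately show "c0 * B + C \<le> c0 * s^(Suc e)" by linarith
      qed
      also have "\<dots> = c0 * (s^Suc j)^(Suc e)" unfolding T_def t_def by (simp add: power_mult_distrib algebra_simps)
      finally show "card S \<le> c0 * (s^Suc j)^(Suc e)" .
    qed
  qed
  show ?case
  proof (intro exI[of _ "c0 * s^(Suc e)"] allI impI)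
    fix m S assume h: "S \<subseteq> Gr m I \<and> \<not> haspat A L I S"
    show "card S \<le> c0 * s^(Suc e) * m^(Suc e)"
    proof (cases "m = 0")
      case True then show ?thesis using h Gr_0[OF ne] by auto
    next
      case False
      then obtain j where j: "m \<le> s^j" "s^j \<le> s*m" using pow_between[OF ar(3)] by (metis One_nat_def Suc_leI neq0_conv)
      have "S \<subseteq> Gr (s^j) I" using h Gr_mono[OF j(1)] by blast
      then have "card S \<le> c0 * (s^j)^(Suc e)" using pw h by blast
      also have "\<dots> \<le> c0 * (s*m)^(Suc e)" using j(2) by (intro mult_le_mono2 power_mono) auto
      also have "\<dots> = c0 * s^(Suc e) * m^(Suc e)" by (simp add: power_mult_distrib)
      finally show ?thesis .
    qed
  qed
qed



lemma rank_lemma: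
  fixes k :: "'a \<Rightarrow> 'b::linorder"
  assumes fA: "finite A" and inj: "inj_on k A"
  defines "rk \<equiv> \<lambda>a. card {b\<in>A. k b \<le> k a}"
  shows "bij_betw rk A {1..card A}" "\<forall>a\<in>A. \<forall>b\<in>A. rk a \<le> rk b \<longleftrightarrow> k a \<le> k b"
proof -
  have mono: "rk a \<le> rk b" if "a \<in> A" "b \<in> A" "k a \<le> k b" for a b
    unfolding rk_def using that fA by (intro card_mono) auto
  have smono: "rk a < rk b" if "a \<in> A" "b \<in> A" "k a < k b" for a b
  proof -
    have "{c\<in>A. k c \<le> k a} \<subseteq> {c\<in>A. k c \<le> k b}" using that by auto
    moreover have "b \<in> {c\<in>A. k c \<le> k b}" "b \<notin> {c\<in>A. k c \<le> k a}" using that by auto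
    ultimately have "{c\<in>A. k c \<le> k a} \<subset> {c\<in>A. k c \<le> k b}" by blast
    then show ?thesis unfolding rk_def using fA by (intro psubset_card_mono) auto
  qed
  show iff: "\<forall>a\<in>A. \<forall>b\<in>A. rk a \<le> rk b \<longleftrightarrow> k a \<le> k b"
    using mono smono by (meson linorder_not_le)
  have injr: "inj_on rk A"
  proof (rule inj_onI)
    fix a b assume ab: "a \<in> A" "b \<in> A" and e: "rk a = rk b"
    have "rk a \<le> rk b" "rk b \<le> rk a" using e by simp_all
    then have "k a \<le> k b" "k b \<le> k a" using iff ab by blast+
    then have "k a = k b" by (rule order_antisym)
    then show "a = b" using inj \<open>a \<in> A\<close> \<open>b \<in> A\<close> by (meson inj_onD)
  qed
  have rng: "rk ` A \<subseteq> {1..card A}"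
  proof
    fix y assume "y \<in> rk ` A"
    then obtain a where a: "a \<in> A" "y = rk a" by blast
    have "a \<in> {b\<in>A. k b \<le> k a}" using a by simp
    then have "1 \<le> rk a" unfolding rk_def using fA by (metis (no_types, lifting) One_nat_def Suc_leI card_gt_0_iff empty_iff finite_subset mem_Collect_eq subsetI)
    moreover have "rk a \<le> card A" unfolding rk_def using fA by (intro card_mono) auto
    ultimately show "y \<in> {1..card A}" using a by simp
  qed
  have "card (rk ` A) = card {1..card A}" using card_image[OF injr] by simp
  then have "rk ` A = {1..card A}" using rng by (intro card_subset_eq) auto
  then show "bij_betw rk A {1..card A}" using injr by (simp add: bij_betw_def)
qed

lemma realizer_exists:
  assumes fA: "finite A" and po: "partial_order_on_set A le"
  shows "\<exists>d. 0 < d \<and> realizer A le d"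
proof -
  have refl: "\<forall>x\<in>A. le x x" and antis: "\<forall>x\<in>A. \<forall>y\<in>A. le x y \<and> le y x \<longrightarrow> x = y"
    and trans: "\<forall>x\<in>A. \<forall>y\<in>A. \<forall>z\<in>A. le x y \<and> le y z \<longrightarrow> le x z"
    using po unfolding partial_order_on_set_def by blast+
  have transR: "le x z" if "x \<in> A" "y \<in> A" "z \<in> A" "le x y" "le y z" for x y z
    using trans that by blast
  have antisR: "x = y" if "x \<in> A" "y \<in> A" "le x y" "le y x" for x y
    using antis that by blast
  obtain h :: "'a \<Rightarrow> nat" and n where h: "h ` A = {i. i < n}" "inj_on h A"
    using finite_imp_inj_to_nat_seg[OF fA] by blast
  define key where "key x a = ((if x \<in> A \<and> le x a then 1 else 0::nat), card {b\<in>A. le b a \<and> b \<noteq> a}, h a)" for x a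
  define rk where "rk x a = card {b\<in>A. key x b \<le> key x a}" for x a
  have injk: "inj_on (key x) A" for x
    using h(2) unfolding key_def inj_on_def by auto
  have bij: "bij_betw (rk x) A {1..card A}" and rki: "\<forall>a\<in>A. \<forall>b\<in>A. rk x a \<le> rk x b \<longleftrightarrow> key x a \<le> key x b" for x
    using rank_lemma[OF fA injk[of x]] unfolding rk_def by auto
  have kmono: "key x a < key x b" if "a \<in> A" "b \<in> A" "le a b" "a \<noteq> b" for x a b
  proof -
    have f1: "(if x \<in> A \<and> le x a then 1 else 0::nat) \<le> (if x \<in> A \<and> le x b then 1 else 0)"
      using transR[of x a b] that by auto
    have "{c\<in>A. le c a \<and> c \<noteq> a} \<subset> {c\<in>A. le c b \<and> c \<noteq> b}"
    proof
      show "{c\<in>A. le c a \<and> c \<noteq> a} \<subseteq> {c\<in>A. le c b \<and> c \<noteq> b}"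
      proof
        fix c assume "c \<in> {c\<in>A. le c a \<and> c \<noteq> a}"
        then have c: "c \<in> A" "le c a" "c \<noteq> a" by auto
        have "le c b" using transR[of c a b] c that by blast
        moreover have "c \<noteq> b" using antisR[of a b] c that by blast
        ultimately show "c \<in> {c\<in>A. le c b \<and> c \<noteq> b}" using c by blast
      qed
      have "a \<in> {c\<in>A. le c b \<and> c \<noteq> b}" "a \<notin> {c\<in>A. le c a \<and> c \<noteq> a}" using that by auto
      then show "{c\<in>A. le c a \<and> c \<noteq> a} \<noteq> {c\<in>A. le c b \<and> c \<noteq> b}" by blast
    qed
    then have f2: "card {c\<in>A. le c a \<and> c \<noteq> a} < card {c\<in>A. le c b \<and> c \<noteq> b}"
      using fA by (intro psubset_card_mono) auto
    show ?thesis unfolding key_def by (simp only: less_prod_simp) (use f1 f2 in blast)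
  qed
  obtain xs where xs: "set xs = A" using finite_list[OF fA] by blast
  define L where "L i = rk (if i < length xs then xs ! i else undefined)" for i
  have "realizer A le (Suc (length xs))"
    unfolding realizer_def
  proof (intro exI[of _ L] conjI ballI allI impI)
    fix i show "bij_betw (L i) A {1..card A}" unfolding L_def using bij by blast
  next
    fix p q assume p: "p \<in> A" and q: "q \<in> A"
    show "le p q \<longleftrightarrow> (\<forall>i<Suc (length xs). L i p \<le> L i q)"
    proof
      assume "le p q"
      then have "key x p \<le> key x q" for x using kmono[OF p q] by (cases "p = q") (auto intro: less_imp_le)
      then show "\<forall>i<Suc (length xs). L i p \<le> L i q" unfolding L_def using rki p q by blast
    next
      assume all: "\<forall>i<Suc (length xs). L i p \<le> L i q"
      show "le p q"
      proof (rule ccontr)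
        assume npq: "\<not> le p q"
        show False
        proof (cases "le q p")
          case True
          then have "q \<noteq> p" using npq refl p by auto
          then have "key (if 0 < length xs then xs ! 0 else undefined) q < key (if 0 < length xs then xs ! 0 else undefined) p"
            using kmono[OF q p True] by blast
          moreover have "L 0 p \<le> L 0 q" using all by blast
          ultimately show False unfolding L_def using rki p q by (meson leD)
        next
          case False
          obtain i where i: "i < length xs" "xs ! i = p" using p xs by (metis in_set_conv_nth)
          have "key p q < key p p" unfolding key_def using p refl npq by (auto simp: less_prod_def')
          moreover have "L i p \<le> L i q" using all i by simp
          then have "rk p p \<le> rk p q" unfolding L_def using i by simp
          then have "key p p \<le> key p q" using rki p q by blast
          ultimately show False by simp
        qed
      qed
    qed
  qed
  then show ?thesis by blast
qed

lemma dim_realizer: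
  assumes "finite A" "partial_order_on_set A le"
  shows "0 < poset_dim A le \<and> realizer A le (poset_dim A le)"
  unfolding poset_dim_def using realizer_exists[OF assms] by (rule LeastI_ex)


theorem corollary4:
  fixes A :: "'a set" and le :: "'a \<Rightarrow> 'a \<Rightarrow> bool" and d :: nat
  assumes "finite A" and "partial_order_on_set A le" and "poset_dim A le = d"
  shows "\<exists>c::real. \<forall>m::nat. 0 < m \<longrightarrow>
           (\<forall>S. S \<subseteq> grid m d \<and> \<not> contains_copy S A le \<longrightarrow>
                real (card S) \<le> c * real m ^ (d - 1))"
proof -
  have d0: "0 < d" and re: "realizer A le d" using dim_realizer[OF assms(1,2)] assms(3) by auto
  obtain L :: "nat \<Rightarrow> 'a \<Rightarrow> nat" where bijL: "\<forall>i<d. bij_betw (L i) A {1..card A}"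
    and LL: "\<forall>p\<in>A. \<forall>q\<in>A. le p q \<longleftrightarrow> (\<forall>i<d. L i p \<le> L i q)"
    using re unfolding realizer_def by blast
  define I where "I = {0..<d}"
  have fI: "finite I" and cI: "card I = Suc (d - 1)" unfolding I_def using d0 by auto
  have injL: "\<forall>i\<in>I. inj_on (L i) A" using bijL unfolding I_def by (auto simp: bij_betw_def)
  obtain c0 :: nat where c0: "\<forall>m S. S \<subseteq> Gr m I \<and> \<not> haspat A L I S \<longrightarrow> card S \<le> c0 * m^(d-1)"
    using MT[OF assms(1) fI cI injL] by blast
  show ?thesis
  proof (intro exI[of _ "real c0"] allI impI)
    fix m :: nat and S assume "0 < m" and h: "S \<subseteq> grid m d \<and> \<not> contains_copy S A le"
    define \<phi> where "\<phi> x = (\<lambda>i\<in>I. x ! i)" for x :: "nat list"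
    have len: "length x = d" if "x \<in> S" for x using h that by (auto simp: grid_def)
    have phiG: "\<phi> ` S \<subseteq> Gr m I"
    proof
      fix y assume "y \<in> \<phi> ` S"
      then obtain x where x: "x \<in> S" "y = \<phi> x" by blast
      have "x ! i \<in> {1..m}" if "i \<in> I" for i
      proof -
        have "x \<in> grid m d" using h x by blast
        then have "length x = d" "set x \<subseteq> {1..m}" by (auto simp: grid_def)
        moreover have "i < d" using that I_def by auto
        ultimately show ?thesis by (metis nth_mem subsetD)
      qed
      then show "y \<in> Gr m I" unfolding x(2) \<phi>_def Gr_def by auto
    qed
    have injphi: "inj_on \<phi> S"
    proof (rule inj_onI)
      fix x y assume x: "x \<in> S" and y: "y \<in> S" and e: "\<phi> x = \<phi> y"
      show "x = y"
      proof (rule nth_equalityI)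
        show "length x = length y" using len x y by simp
        fix i assume "i < length x"
        then have "i \<in> I" using len x unfolding I_def by auto
        then show "x ! i = y ! i" using fun_cong[OF e, of i] unfolding \<phi>_def by simp
      qed
    qed
    have np: "\<not> haspat A L I (\<phi> ` S)"
    proof
      assume "haspat A L I (\<phi> ` S)"
      then obtain g' where g'1: "\<forall>a\<in>A. g' a \<in> \<phi> ` S"
        and g'2: "\<forall>a\<in>A. \<forall>b\<in>A. \<forall>i\<in>I. L i a < L i b \<longrightarrow> g' a i < g' b i"
        unfolding haspat_def by blast
      have "\<forall>a\<in>A. \<exists>x. x \<in> S \<and> \<phi> x = g' a"
      proof
        fix a assume "a \<in> A"
        then obtain x where "x \<in> S" "g' a = \<phi> x" using g'1 by blast
        then show "\<exists>x. x \<in> S \<and> \<phi> x = g' a" by metis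
      qed
      then obtain g where g: "\<forall>a\<in>A. g a \<in> S \<and> \<phi> (g a) = g' a"
        using bchoice[of A "\<lambda>a x. x \<in> S \<and> \<phi> x = g' a"] by blast
      have gi: "g a ! i = g' a i" if "a \<in> A" "i < d" for a i
      proof -
        have "\<phi> (g a) i = g' a i" using g that by simp
        then show ?thesis using that unfolding \<phi>_def I_def by simp
      qed
      have lt: "g a ! i < g b ! i" if "a \<in> A" "b \<in> A" "i < d" "L i a < L i b" for a b i
        using g'2 that gi unfolding I_def by auto
      have iff: "L i p \<le> L i q \<longleftrightarrow> g p ! i \<le> g q ! i" if "p \<in> A" "q \<in> A" "i < d" for p q i
      proof (cases "p = q")
        case True then show ?thesis by simp
      next
        case False
        have "L i p \<noteq> L i q" using injL that False unfolding I_def by (meson atLeastLessThan_iff inj_onD zero_le)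
        then consider "L i p < L i q" | "L i q < L i p" by linarith
        then show ?thesis
        proof cases
          case 1 then show ?thesis using lt[of p q i] that by auto
        next
          case 2 then show ?thesis using lt[of q p i] that by auto
        qed
      qed
      have "contains_copy S A le" unfolding contains_copy_def
      proof (intro exI[of _ g] conjI ballI)
        show "inj_on g A"
        proof (rule inj_onI)
          fix a b assume a: "a \<in> A" and b: "b \<in> A" and e: "g a = g b"
          show "a = b"
          proof (rule ccontr)
            assume "a \<noteq> b"
            then have "L 0 a \<noteq> L 0 b" using injL a b d0 unfolding I_def by (meson atLeastLessThan_iff inj_onD le0)
            then consider "L 0 a < L 0 b" | "L 0 b < L 0 a" by linarith
            then show False
            proof cases
              case 1 then show False using lt[of a b 0] a b d0 e by simp
            next
              case 2 then show False using lt[of b a 0] a b d0 e by simp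
            qed
          qed
        qed
        show "g ` A \<subseteq> S" using g by blast
        fix p q assume p: "p \<in> A" and q: "q \<in> A"
        have "le p q \<longleftrightarrow> (\<forall>i<d. L i p \<le> L i q)" using LL p q by blast
        also have "\<dots> \<longleftrightarrow> (\<forall>i<d. g p ! i \<le> g q ! i)" using iff p q by blast
        also have "\<dots> \<longleftrightarrow> pw_le (g p) (g q)"
          unfolding pw_le_def list_all2_conv_all_nth using len g p q by auto
        finally show "le p q \<longleftrightarrow> pw_le (g p) (g q)" .
      qed
      then show False using h by blast
    qed
    have "card S = card (\<phi> ` S)" using card_image[OF injphi] by simp
    also have "\<dots> \<le> c0 * m^(d-1)" using c0 phiG np by blast
    finally have "real (card S) \<le> real (c0 * m^(d-1))" by linarith
    then show "real (card S) \<le> real c0 * real m ^ (d - 1)" by simp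
  qed
qed

end
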